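(* Let $v\in\mathrm{Box}(\Sigma)$, $\gamma^v$ as in the context, and $l\in\mathbb L$. Then the expression $x^v\prod_{j=1}^n\frac{z_j^{l_j+\gamma^v_j+D_j}}{\Gamma(l_j+\gamma^v_j+D_j+1)}$ vanishes in the completion of $\mathbb C[K,\Sigma]$ unless $l\in\mathcal S_\Sigma(\gamma^v)$.
   Context: $N\cong\mathbb Z^d$ lattice, $\mathcal A=\{v_1,\dots,v_n\}\subset N$ generating $N$ with a homomorphism $\mathrm h:N\to\mathbb Z$, $\mathrm h(v_j)=1$; $\mathbb L=\{l\in\mathbb Z^n:\sum l_jv_j=0\}$; $K=\mathbb R_{\ge0}\mathrm{Conv}(\mathcal A)$; $\Sigma$ the simplicial fan supported on $K$ from a regular triangulation of $\mathrm{Conv}(\mathcal A)$ with vertices in $\mathcal A$. $\mathbb C[K,\Sigma]$: basis $x^w$, $w\in K\cap N$, $x^{w_1}x^{w_2}=x^{w_1+w_2}$ if a cone of $\Sigma$ contains both, else $0$; graded by $\mathrm h$, completed w.r.t. this grading. $\mathrm{Box}(\Sigma)$: $v\in N$ with $v=\sum q^v_jv_j$, $0\le q^v_j<1$, $q^v_j=0$ unless $v_j$ spans a ray of one fixed maximal cone. Fix $\beta\in N$ and $\gamma^v\in\mathbb Q^n$ with $\sum\gamma^v_jv_j=\beta$, $\gamma^v_j-q^v_j\in\mathbb Z$. $D_j=x^{v_j}$ if $\mathbb R_{\ge0}v_j\in\Sigma$, else $D_j=0$; the factors $z_j^{a+D_j}/\Gamma(a+D_j+1)$ are understood as power series in $D_j$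 (Taylor expansion of $s\mapsto z_j^s/\Gamma(s+1)$ at $s=a$), $z_j\in\mathbb C^*$ with a chosen argument. For $\gamma\in\mathbb Q^n$ and $l\in\mathbb L$, $\mathrm{Supp}(l)=\{v_j:l_j+\gamma_j\notin\mathbb Z_{\ge0}\}$, and $\mathcal S_\Sigma(\gamma)$ is the set of $l\in\mathbb L$ such that all elements of $\mathrm{Supp}(l)$ generate rays of a single maximal cone of $\Sigma$. *)

theory Defs
  imports "HOL-Analysis.Analysis"
begin

text \<open>Lattice N = Z^d is modelled as int^'d; the vectors v_1..v_n as v 0 .. v (n-1).
  A subset of indices sigma stands for the cone spanned by the v_j, j in sigma.\<close>

definition rv :: "int^'d \<Rightarrow> real^'d" where
  "rv w = (\<chi> i. real_of_int (w $ i))"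

definition Kcone :: "(nat \<Rightarrow> int^'d) \<Rightarrow> nat \<Rightarrow> (real^'d) set" where
  "Kcone v n = {x. \<exists>c::nat \<Rightarrow> real. (\<forall>j. 0 \<le> c j) \<and> x = (\<Sum>j<n. c j *\<^sub>R rv (v j))}"

definition conegen :: "(nat \<Rightarrow> int^'d) \<Rightarrow> nat set \<Rightarrow> (real^'d) set" where
  "conegen v \<sigma> = {x. \<exists>c::nat \<Rightarrow> real. (\<forall>j. 0 \<le> c j) \<and> x = (\<Sum>j\<in>\<sigma>. c j *\<^sub>R rv (v j))}"

text \<open>T is the set of maximal simplices (index sets) of a regular triangulation of Conv(A)
  with vertices in A: induced by a height function omega (cells = lower faces of the lifted
  point configuration), all maximal cells being simplices which cover Conv(A). Since all v_j lie
  on the hyperplane h = 1, affine functions on it are restrictions of linear functionals p.\<close>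
definition regular_triangulation :: "(nat \<Rightarrow> int^'d) \<Rightarrow> nat \<Rightarrow> nat set set \<Rightarrow> bool" where
  "regular_triangulation v n T \<longleftrightarrow>
     (\<exists>\<omega>::nat \<Rightarrow> real. T = {\<sigma>. \<sigma> \<subseteq> {..<n}
          \<and> independent ((\<lambda>j. rv (v j)) ` \<sigma>)
          \<and> card ((\<lambda>j. rv (v j)) ` \<sigma>) = CARD('d)
          \<and> (\<exists>p::real^'d. (\<forall>j\<in>\<sigma>. p \<bullet> rv (v j) = \<omega> j)
                          \<and> (\<forall>j\<in>{..<n} - \<sigma>. p \<bullet> rv (v j) < \<omega> j))})
     \<and> (\<Union>\<sigma>\<in>T. conegen v \<sigma>) = Kcone v n"

definition is_ray :: "nat set set \<Rightarrow> nat \<Rightarrow> bool" where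
  "is_ray T j \<longleftrightarrow> (\<exists>\<sigma>\<in>T. j \<in> \<sigma>)"

text \<open>Elements of the completion of C[K,Sigma] (w.r.t. the h-grading): arbitrary coefficient
  functions on K \<inter> N (formal infinite sums of x^w).\<close>
type_synonym 'd ring_elt = "int^'d \<Rightarrow> complex"

definition inK :: "(nat \<Rightarrow> int^'d) \<Rightarrow> nat \<Rightarrow> int^'d \<Rightarrow> bool" where
  "inK v n w \<longleftrightarrow> rv w \<in> Kcone v n"

definition samecone :: "(nat \<Rightarrow> int^'d) \<Rightarrow> nat set set \<Rightarrow> int^'d \<Rightarrow> int^'d \<Rightarrow> bool" where
  "samecone v T w1 w2 \<longleftrightarrow> (\<exists>\<sigma>\<in>T. rv w1 \<in> conegen v \<sigma> \<and> rv w2 \<in> conegen v \<sigma>)"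

definition xmon :: "int^'d \<Rightarrow> 'd ring_elt" where
  "xmon u = (\<lambda>w. if w = u then 1 else 0)"

text \<open>multiplication: x^{w1} x^{w2} = x^{w1+w2} if a cone of Sigma contains both, else 0
  (each coefficient is a finite sum since K is pointed and graded by h).\<close>
definition rmult :: "(nat \<Rightarrow> int^'d) \<Rightarrow> nat \<Rightarrow> nat set set \<Rightarrow> 'd ring_elt \<Rightarrow> 'd ring_elt \<Rightarrow> 'd ring_elt" where
  "rmult v n T f g = (\<lambda>w. \<Sum>w1\<in>{w1. inK v n w1 \<and> inK v n (w - w1) \<and> samecone v T w1 (w - w1)}.
                           f w1 * g (w - w1))"

definition rpow :: "(nat \<Rightarrow> int^'d) \<Rightarrow> nat \<Rightarrow> nat set set \<Rightarrow> 'd ring_elt \<Rightarrow> nat \<Rightarrow> 'd ring_elt" where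
  "rpow v n T D k = (rmult v n T D ^^ k) (xmon 0)"

definition pseries :: "(nat \<Rightarrow> int^'d) \<Rightarrow> nat \<Rightarrow> nat set set \<Rightarrow> (nat \<Rightarrow> complex) \<Rightarrow> 'd ring_elt \<Rightarrow> 'd ring_elt" where
  "pseries v n T c D = (\<lambda>w. \<Sum>k. c k * rpow v n T D k w)"

definition Dj :: "(nat \<Rightarrow> int^'d) \<Rightarrow> nat set set \<Rightarrow> nat \<Rightarrow> 'd ring_elt" where
  "Dj v T j = (if is_ray T j then xmon (v j) else (\<lambda>_. 0))"

text \<open>k-th Taylor coefficient at s = a of s \<mapsto> z^s / Gamma(s+1), where z^s = exp(s * L)
  with L a chosen logarithm of z (chosen argument).\<close>
definition taylor_coeff :: "complex \<Rightarrow> complex \<Rightarrow> nat \<Rightarrow> complex" where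
  "taylor_coeff L a k = (deriv ^^ k) (\<lambda>s. exp (s * L) * rGamma (s + 1)) a / fact k"

text \<open>x^v prod_j z_j^{a_j + D_j} / Gamma(a_j + D_j + 1)\<close>
definition gamma_expr :: "(nat \<Rightarrow> int^'d) \<Rightarrow> nat \<Rightarrow> nat set set \<Rightarrow> (nat \<Rightarrow> complex)
    \<Rightarrow> (nat \<Rightarrow> rat) \<Rightarrow> int^'d \<Rightarrow> 'd ring_elt" where
  "gamma_expr v n T L a u =
     foldl (\<lambda>acc j. rmult v n T acc (pseries v n T (taylor_coeff (L j) (of_rat (a j))) (Dj v T j)))
           (xmon u) [0..<n]"

definition relations :: "(nat \<Rightarrow> int^'d) \<Rightarrow> nat \<Rightarrow> (nat \<Rightarrow> int) set" where
  "relations v n = {l. \<forall>i. (\<Sum>j<n. l j * v j $ i) = 0}"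

definition Supp :: "nat \<Rightarrow> (nat \<Rightarrow> rat) \<Rightarrow> (nat \<Rightarrow> int) \<Rightarrow> nat set" where
  "Supp n \<gamma> l = {j. j < n \<and> \<not> (\<exists>m::nat. of_int (l j) + \<gamma> j = of_nat m)}"

definition S_Sigma :: "(nat \<Rightarrow> int^'d) \<Rightarrow> nat \<Rightarrow> nat set set \<Rightarrow> (nat \<Rightarrow> rat) \<Rightarrow> (nat \<Rightarrow> int) set" where
  "S_Sigma v n T \<gamma> = {l \<in> relations v n. \<exists>\<sigma>\<in>T. Supp n \<gamma> l \<subseteq> \<sigma>}"

end

theory Submission
  imports Defs
begin

definition kv :: "nat \<Rightarrow> int^'d \<Rightarrow> int^'d" where
  "kv k u = (\<chi> i. int k * u $ i)"

definition invp :: "(nat \<Rightarrow> int^'d) \<Rightarrow> nat \<Rightarrow> nat set set \<Rightarrow> nat set \<Rightarrow> int^'d \<Rightarrow> bool" where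
  "invp v n T F w \<longleftrightarrow> (\<exists>\<sigma>\<in>T. \<exists>a::nat\<Rightarrow>real. (\<forall>i. 0 \<le> a i) \<and> (\<forall>i<n. 0 < a i \<longrightarrow> i \<in> \<sigma>)
      \<and> rv w = (\<Sum>i<n. a i *\<^sub>R rv (v i)) \<and> (\<forall>i\<in>F. 0 < a i))"

lemma rv_add: "rv (a + b) = rv a + rv b"
  by (simp add: rv_def vec_eq_iff)

lemma rv_kv: "rv (kv k u) = real k *\<^sub>R rv u"
  by (simp add: rv_def kv_def vec_eq_iff)

lemma rmult_nz:
  assumes "rmult v n T f g w \<noteq> 0"
  shows "\<exists>w1. f w1 \<noteq> 0 \<and> g (w - w1) \<noteq> 0 \<and> samecone v T w1 (w - w1)"
proof -
  from assms obtain w1 where "w1 \<in> {w1. inK v n w1 \<and> inK v n (w - w1) \<and> samecone v T w1 (w - w1)}"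
    and "f w1 * g (w - w1) \<noteq> 0"
    unfolding rmult_def by (meson sum.not_neutral_contains_not_neutral)
  then show ?thesis by auto
qed

lemma rpow_nz:
  assumes "rpow v n T (Dj v T j) k w \<noteq> 0"
  shows "w = kv k (v j) \<and> (k \<noteq> 0 \<longrightarrow> is_ray T j)"
  using assms
proof (induction k arbitrary: w)
  case 0
  then show ?case by (auto simp: rpow_def xmon_def kv_def vec_eq_iff split: if_splits)
next
  case (Suc k)
  have "rmult v n T (Dj v T j) (rpow v n T (Dj v T j) k) w \<noteq> 0"
    using Suc.prems by (simp add: rpow_def)
  then obtain w1 where h1: "Dj v T j w1 \<noteq> 0" and h2: "rpow v n T (Dj v T j) k (w - w1) \<noteq> 0"
    using rmult_nz by blast
  from h1 have r: "is_ray T j" and w1: "w1 = v j"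
    by (auto simp: Dj_def xmon_def split: if_splits)
  from Suc.IH[OF h2] w1 have "w - v j = kv k (v j)" by simp
  then have "w = kv (Suc k) (v j)"
    by (simp add: kv_def vec_eq_iff algebra_simps)
  with r show ?case by simp
qed

lemma pseries_nz:
  assumes "pseries v n T c (Dj v T j) w \<noteq> 0"
  shows "\<exists>k. c k \<noteq> 0 \<and> w = kv k (v j) \<and> (k \<noteq> 0 \<longrightarrow> is_ray T j)"
proof (rule ccontr)
  assume a: "\<not> ?thesis"
  have "\<forall>k. c k * rpow v n T (Dj v T j) k w = 0"
    using a rpow_nz by fastforce
  then have "(\<lambda>k. c k * rpow v n T (Dj v T j) k w) = (\<lambda>_. 0)" by auto
  then have "pseries v n T c (Dj v T j) w = 0" unfolding pseries_def by simp
  with assms show False by simp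
qed

lemma key:
  assumes fan: "regular_triangulation v n T"
    and s: "\<sigma> \<in> T" and s': "\<sigma>' \<in> T"
    and x: "x \<in> conegen v \<sigma>"
    and xa: "x = (\<Sum>i<n. a i *\<^sub>R rv (v i))"
    and apos: "\<forall>i. 0 \<le> a i" and asupp: "\<forall>i<n. 0 < a i \<longrightarrow> i \<in> \<sigma>'"
  shows "\<forall>i<n. 0 < a i \<longrightarrow> i \<in> \<sigma>"
proof (rule ccontr)
  assume "\<not> ?thesis"
  then obtain i0 where i0: "i0 < n" "0 < a i0" "i0 \<notin> \<sigma>" by blast
  from fan obtain \<omega> :: "nat \<Rightarrow> real" where Teq: "T = {\<sigma>. \<sigma> \<subseteq> {..<n}
          \<and> independent ((\<lambda>j. rv (v j)) ` \<sigma>)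
          \<and> card ((\<lambda>j. rv (v j)) ` \<sigma>) = CARD('a)
          \<and> (\<exists>p::real^'a. (\<forall>j\<in>\<sigma>. p \<bullet> rv (v j) = \<omega> j)
                          \<and> (\<forall>j\<in>{..<n} - \<sigma>. p \<bullet> rv (v j) < \<omega> j))}"
    unfolding regular_triangulation_def by blast
  from s Teq obtain p where sn: "\<sigma> \<subseteq> {..<n}" and p1: "\<forall>j\<in>\<sigma>. p \<bullet> rv (v j) = \<omega> j"
    and p2: "\<forall>j\<in>{..<n} - \<sigma>. p \<bullet> rv (v j) < \<omega> j" by blast
  from s' Teq obtain p' where p1': "\<forall>j\<in>\<sigma>'. p' \<bullet> rv (v j) = \<omega> j"
    and p2': "\<forall>j\<in>{..<n} - \<sigma>'. p' \<bullet> rv (v j) < \<omega> j" by blast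
  from x obtain c where cpos: "\<forall>j. 0 \<le> c j" and xc: "x = (\<Sum>j\<in>\<sigma>. c j *\<^sub>R rv (v j))"
    unfolding conegen_def by blast
  have fin: "finite \<sigma>" using sn finite_subset by blast
  have e1: "p \<bullet> x = (\<Sum>j\<in>\<sigma>. c j * \<omega> j)"
    unfolding xc by (simp add: inner_sum_right p1)
  have e2: "p \<bullet> x = (\<Sum>j<n. a j * (p \<bullet> rv (v j)))"
    unfolding xa by (simp add: inner_sum_right)
  have lt: "(\<Sum>j<n. a j * (p \<bullet> rv (v j))) < (\<Sum>j<n. a j * \<omega> j)"
  proof (rule sum_strict_mono_ex1)
    show "finite {..<n}" by simp
    show "\<forall>j\<in>{..<n}. a j * (p \<bullet> rv (v j)) \<le> a j * \<omega> j"
    proof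
      fix j assume "j \<in> {..<n}"
      then have "p \<bullet> rv (v j) \<le> \<omega> j" using p1 p2 by (cases "j \<in> \<sigma>") force+
      then show "a j * (p \<bullet> rv (v j)) \<le> a j * \<omega> j" using apos by (simp add: mult_left_mono)
    qed
    show "\<exists>j\<in>{..<n}. a j * (p \<bullet> rv (v j)) < a j * \<omega> j"
      using i0 p2 by (intro bexI[of _ i0]) auto
  qed
  have e3: "p' \<bullet> x = (\<Sum>j<n. a j * \<omega> j)"
  proof -
    have "p' \<bullet> x = (\<Sum>j<n. a j * (p' \<bullet> rv (v j)))"
      unfolding xa by (simp add: inner_sum_right)
    also have "\<dots> = (\<Sum>j<n. a j * \<omega> j)"
    proof (rule sum.cong)
      fix j assume j: "j \<in> {..<n}"
      show "a j * (p' \<bullet> rv (v j)) = a j * \<omega> j"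
      proof (cases "0 < a j")
        case True then show ?thesis using j asupp p1' by auto
      next
        case False then have "a j = 0" using apos by (meson antisym not_le)
        then show ?thesis by simp
      qed
    qed simp
    finally show ?thesis .
  qed
  have e4: "p' \<bullet> x \<le> (\<Sum>j\<in>\<sigma>. c j * \<omega> j)"
  proof -
    have "p' \<bullet> x = (\<Sum>j\<in>\<sigma>. c j * (p' \<bullet> rv (v j)))"
      unfolding xc by (simp add: inner_sum_right)
    also have "\<dots> \<le> (\<Sum>j\<in>\<sigma>. c j * \<omega> j)"
    proof (rule sum_mono)
      fix j assume j: "j \<in> \<sigma>"
      then have "j < n" using sn by auto
      then have "p' \<bullet> rv (v j) \<le> \<omega> j" using p1' p2' by (cases "j \<in> \<sigma>'") force+
      then show "c j * (p' \<bullet> rv (v j)) \<le> c j * \<omega> j" using cpos by (simp add: mult_left_mono)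
    qed
    finally show ?thesis .
  qed
  show False using e1 e2 lt e3 e4 by linarith
qed

lemma invp_mono: "invp v n T F w \<Longrightarrow> F' \<subseteq> F \<Longrightarrow> invp v n T F' w"
  unfolding invp_def by blast

lemma step:
  assumes fan: "regular_triangulation v n T"
    and inv: "invp v n T F w1"
    and sc: "samecone v T w1 (kv k (v j))"
    and j: "j < n"
    and ray: "k \<noteq> 0 \<longrightarrow> is_ray T j"
  shows "invp v n T (F \<union> (if k \<noteq> 0 then {j} else {})) (w1 + kv k (v j))"
proof -
  from inv obtain \<sigma>' a where s': "\<sigma>' \<in> T" and apos: "\<forall>i. 0 \<le> a i"
    and asupp: "\<forall>i<n. 0 < a i \<longrightarrow> i \<in> \<sigma>'" and rep: "rv w1 = (\<Sum>i<n. a i *\<^sub>R rv (v i))"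
    and aF: "\<forall>i\<in>F. 0 < a i" unfolding invp_def by blast
  from sc obtain \<sigma> where s: "\<sigma> \<in> T" and c1: "rv w1 \<in> conegen v \<sigma>"
    and c2: "rv (kv k (v j)) \<in> conegen v \<sigma>" unfolding samecone_def by blast
  have A: "\<forall>i<n. 0 < a i \<longrightarrow> i \<in> \<sigma>"
    using key[OF fan s s' c1 rep apos asupp] .
  define b where "b = (\<lambda>i. if i = j then real k else 0)"
  have bsum: "(\<Sum>i<n. b i *\<^sub>R rv (v i)) = real k *\<^sub>R rv (v j)"
  proof -
    have "(\<Sum>i<n. b i *\<^sub>R rv (v i)) = (\<Sum>i<n. if i = j then real k *\<^sub>R rv (v j) else 0)"
      by (rule sum.cong) (auto simp: b_def)
    also have "\<dots> = real k *\<^sub>R rv (v j)" using j by simp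
    finally show ?thesis .
  qed
  have B: "k \<noteq> 0 \<Longrightarrow> j \<in> \<sigma>"
  proof -
    assume k: "k \<noteq> 0"
    with ray obtain \<tau> where t: "\<tau> \<in> T" "j \<in> \<tau>" unfolding is_ray_def by blast
    have "\<forall>i<n. 0 < b i \<longrightarrow> i \<in> \<sigma>"
      by (rule key[OF fan s t(1) c2]) (use bsum rv_kv t b_def in auto)
    then show "j \<in> \<sigma>" using j k by (simp add: b_def)
  qed
  define a' where "a' = (\<lambda>i. a i + b i)"
  have "rv (w1 + kv k (v j)) = (\<Sum>i<n. a' i *\<^sub>R rv (v i))"
    by (simp add: rv_add rv_kv rep a'_def scaleR_add_left sum.distrib bsum)
  moreover have "\<forall>i. 0 \<le> a' i" using apos by (simp add: a'_def b_def)
  moreover have "\<forall>i<n. 0 < a' i \<longrightarrow> i \<in> \<sigma>"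
    using A B apos by (auto simp: a'_def b_def split: if_splits)
  moreover have "\<forall>i\<in>F \<union> (if k \<noteq> 0 then {j} else {}). 0 < a' i"
    using aF apos by (auto simp: a'_def b_def add_pos_nonneg add_nonneg_pos)
  ultimately show ?thesis unfolding invp_def using s by blast
qed

lemma main:
  assumes fan: "regular_triangulation v n T"
    and inv0: "invp v n T F0 vb"
    and NI: "\<forall>j\<in>NI. c j 0 = 0"
  shows "m \<le> n \<Longrightarrow> foldl (\<lambda>acc j. rmult v n T acc (pseries v n T (c j) (Dj v T j))) (xmon vb) [0..<m] w \<noteq> 0
     \<Longrightarrow> invp v n T (F0 \<union> {j. j < m \<and> j \<in> NI}) w"
proof (induction m arbitrary: w)
  case 0
  then show ?case using inv0 by (auto simp: xmon_def split: if_splits)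
next
  case (Suc m)
  let ?G = "\<lambda>acc j. rmult v n T acc (pseries v n T (c j) (Dj v T j))"
  have "rmult v n T (foldl ?G (xmon vb) [0..<m]) (pseries v n T (c m) (Dj v T m)) w \<noteq> 0"
    using Suc.prems by simp
  then obtain w1 where h1: "foldl ?G (xmon vb) [0..<m] w1 \<noteq> 0"
    and h2: "pseries v n T (c m) (Dj v T m) (w - w1) \<noteq> 0"
    and sc: "samecone v T w1 (w - w1)" using rmult_nz by blast
  from pseries_nz[OF h2] obtain k where k: "c m k \<noteq> 0" "w - w1 = kv k (v m)"
    "k \<noteq> 0 \<longrightarrow> is_ray T m" by blast
  have IH: "invp v n T (F0 \<union> {j. j < m \<and> j \<in> NI}) w1" using Suc h1 by simp
  have "invp v n T ((F0 \<union> {j. j < m \<and> j \<in> NI}) \<union> (if k \<noteq> 0 then {m} else {})) (w1 + kv k (v m))"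
    by (rule step[OF fan IH]) (use sc k Suc.prems in auto)
  moreover have "w1 + kv k (v m) = w" using k(2) by (metis add.commute diff_add_cancel)
  moreover have "m \<in> NI \<Longrightarrow> k \<noteq> 0" using NI k(1) by (metis)
  ultimately show ?case
    by (rule_tac invp_mono) (auto simp: less_Suc_eq split: if_splits)
qed

theorem proposition2p5:
  fixes v :: "nat \<Rightarrow> int^'d" and n :: nat and h :: "int^'d \<Rightarrow> int"
    and T :: "nat set set"
    and vb :: "int^'d" and \<sigma>0 :: "nat set" and q :: "nat \<Rightarrow> rat"
    and \<beta> :: "int^'d" and \<gamma> :: "nat \<Rightarrow> rat"
    and z :: "nat \<Rightarrow> complex" and L :: "nat \<Rightarrow> complex"
    and l :: "nat \<Rightarrow> int"
  assumes inj: "inj_on v {..<n}"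
    and gen: "\<forall>w::int^'d. \<exists>c::nat \<Rightarrow> int. \<forall>i. w $ i = (\<Sum>j<n. c j * v j $ i)"
    and h_add: "\<forall>a b. h (a + b) = h a + h b"
    and h_one: "\<forall>j<n. h (v j) = 1"
    and fan: "regular_triangulation v n T"
    and box_cone: "\<sigma>0 \<in> T"
    and box_q: "\<forall>j. 0 \<le> q j \<and> q j < 1"
    and box_supp: "\<forall>j<n. j \<notin> \<sigma>0 \<longrightarrow> q j = 0"
    and box_sum: "\<forall>i. of_int (vb $ i) = (\<Sum>j<n. q j * of_int (v j $ i))"
    and gamma_sum: "\<forall>i. (\<Sum>j<n. \<gamma> j * of_int (v j $ i)) = of_int (\<beta> $ i)"
    and gamma_int: "\<forall>j<n. \<gamma> j - q j \<in> \<int>"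
    and z_nz: "\<forall>j<n. z j \<noteq> 0"
    and arg: "\<forall>j<n. exp (L j) = z j"
    and l_rel: "l \<in> relations v n"
    and notS: "l \<notin> S_Sigma v n T \<gamma>"
  shows "gamma_expr v n T L (\<lambda>j. of_int (l j) + \<gamma> j) vb = (\<lambda>_. 0)"
  proof -
  define c where "c = (\<lambda>j. taylor_coeff (L j) (of_rat (of_int (l j) + \<gamma> j)))"
  define F0 where "F0 = {j. j < n \<and> 0 < q j}"
  define NI where "NI = {j. j \<in> Supp n \<gamma> l \<and> of_int (l j) + \<gamma> j \<in> \<int>}"
  have inv0: "invp v n T F0 vb"
    unfolding invp_def
  proof (intro bexI[OF _ box_cone] exI[of _ "\<lambda>i. if i < n then real_of_rat (q i) else 0"] conjI)
    show "\<forall>i. 0 \<le> (if i < n then real_of_rat (q i) else 0)" using box_q by auto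
    show "\<forall>i<n. 0 < (if i < n then real_of_rat (q i) else 0) \<longrightarrow> i \<in> \<sigma>0"
      using box_supp by fastforce
    show "\<forall>i\<in>F0. 0 < (if i < n then real_of_rat (q i) else 0)" by (auto simp: F0_def)
    show "rv vb = (\<Sum>i<n. (if i < n then real_of_rat (q i) else 0) *\<^sub>R rv (v i))"
    proof -
      have "(\<Sum>i<n. (if i < n then real_of_rat (q i) else 0) *\<^sub>R rv (v i))
          = (\<Sum>i<n. real_of_rat (q i) *\<^sub>R rv (v i))" by (rule sum.cong) auto
      moreover have "rv vb = (\<Sum>i<n. real_of_rat (q i) *\<^sub>R rv (v i))"
      proof (subst vec_eq_iff, rule allI)
        fix i
        have "real_of_int (vb $ i) = of_rat (of_int (vb $ i))" by simp
        also have "\<dots> = of_rat (\<Sum>j<n. q j * of_int (v j $ i))" using box_sum by simp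
        also have "\<dots> = (\<Sum>j<n. real_of_rat (q j) * real_of_int (v j $ i))"
          by (simp add: of_rat_sum of_rat_mult)
        finally show "rv vb $ i = (\<Sum>j<n. real_of_rat (q j) *\<^sub>R rv (v j)) $ i"
          by (simp add: rv_def sum_component)
      qed
      ultimately show ?thesis by simp
    qed
  qed
  have NI0: "\<forall>j\<in>NI. c j 0 = 0"
  proof
    fix j assume "j \<in> NI"
    then have ns: "\<not> (\<exists>m::nat. of_int (l j) + \<gamma> j = of_nat m)" and zi: "of_int (l j) + \<gamma> j \<in> \<int>"
      by (auto simp: NI_def Supp_def)
    obtain m where m: "of_int (l j) + \<gamma> j = (of_int m :: rat)" using zi unfolding Ints_def by blast
    have "m < 0"
    proof (rule ccontr)
      assume "\<not> m < 0"
      then have "of_int (l j) + \<gamma> j = of_nat (nat m)" using m by simp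
      with ns show False by blast
    qed
    have "(of_rat (of_int (l j) + \<gamma> j) :: complex) + 1 = of_int (m + 1)" using m by simp
    moreover have "(of_int (m + 1) :: complex) \<in> \<int>\<^sub>\<le>\<^sub>0" using \<open>m < 0\<close>
      by (intro nonpos_Ints_of_int) simp
    ultimately have "rGamma ((of_rat (of_int (l j) + \<gamma> j) :: complex) + 1) = 0"
      by (simp add: rGamma_eq_zero_iff)
    then show "c j 0 = 0" by (simp add: c_def taylor_coeff_def)
  qed
  show ?thesis
  proof (rule ext, rule ccontr)
    fix w assume nz: "gamma_expr v n T L (\<lambda>j. of_int (l j) + \<gamma> j) vb w \<noteq> 0"
    have "foldl (\<lambda>acc j. rmult v n T acc (pseries v n T (c j) (Dj v T j))) (xmon vb) [0..<n] w \<noteq> 0"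
      using nz by (simp add: gamma_expr_def c_def)
    from main[OF fan inv0 NI0 order.refl this, unfolded invp_def]
    obtain \<sigma> and a :: "nat \<Rightarrow> real" where s: "\<sigma> \<in> T" and asupp: "\<forall>i<n. 0 < a i \<longrightarrow> i \<in> \<sigma>"
      and aF: "\<forall>i\<in>F0 \<union> {j. j < n \<and> j \<in> NI}. 0 < a i" by auto
    have "Supp n \<gamma> l \<subseteq> F0 \<union> {j. j < n \<and> j \<in> NI}"
    proof
      fix j assume j: "j \<in> Supp n \<gamma> l"
      then have jn: "j < n" by (simp add: Supp_def)
      show "j \<in> F0 \<union> {j. j < n \<and> j \<in> NI}"
      proof (cases "of_int (l j) + \<gamma> j \<in> \<int>")
        case True then show ?thesis using j jn by (auto simp: NI_def)
      next
        case False
        have "q j \<notin> \<int>"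
        proof
          assume "q j \<in> \<int>"
          moreover have "\<gamma> j - q j \<in> \<int>" using gamma_int jn by blast
          ultimately have "of_int (l j) + ((\<gamma> j - q j) + q j) \<in> \<int>"
            by (intro Ints_add) auto
          with False show False by simp
        qed
        then have "q j \<noteq> 0" by auto
        moreover have "0 \<le> q j" using box_q by blast
        ultimately have "0 < q j" by linarith
        then show ?thesis using jn by (simp add: F0_def)
      qed
    qed
    then have "Supp n \<gamma> l \<subseteq> \<sigma>" using aF asupp by (auto simp: Supp_def)
    then have "l \<in> S_Sigma v n T \<gamma>" using l_rel s by (auto simp: S_Sigma_def)
    with notS show False by contradiction
  qed
qed

end
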